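(* For every $n\ge 1$ and every real $\kappa>\frac{n}{2n-1}$ there exists a doubly stochastic $n\times n$ matrix $\mathcal M_\kappa$ such that no directed $(2n-1)$-regular multigraph on $[n]$ has direct throughput at least $\kappa$ with respect to $\mathcal M_\kappa$.
   Context: Let $n\ge 1$ and $[n]=\{1,\dots,n\}$. Networks are finite directed multigraphs on vertex set $[n]$; self-loops and parallel arcs are allowed. A directed multigraph is directed $r$-regular if every vertex has exactly $r$ outgoing and exactly $r$ incoming arcs (a self-loop at $v$ counts as one outgoing and one incoming arc of $v$). An $n\times n$ matrix is doubly stochastic if all entries are nonnegative and every row and every column sums to $1$. In a directed $(2n-1)$-regular multigraph $G$ on $[n]$ every arc has capacity $\frac{1}{2n-1}$. $G$ directly hosts a nonnegative $n\times n$ matrix $\mathcal M=(a_{i,j})$ if $a_{u,v}\le \frac{m_{u,v}}{2n-1}$ for all $u,v\in[n]$, where $m_{u,v}$ is the number of arcs from $u$ to $v$ in $G$ (i.e., all demand can be routed on single arcs within capacities). The direct throughput of $G$ with respect to a doubly stochastic $\mathcal M$ is the largest $\theta$ such that $G$ directly hosts $\theta\mathcal M$. *)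

theory Defs
  imports Complex_Main
begin

text \<open>A directed multigraph on [n] = {1..n} (loops and parallel arcs allowed) is represented
by its arc-multiplicity function: m u v = number of arcs from u to v (only values on [n] matter).
A matrix on [n] is a function nat => nat => real (only entries on [n] matter).\<close>

definition directed_regular :: "nat \<Rightarrow> nat \<Rightarrow> (nat \<Rightarrow> nat \<Rightarrow> nat) \<Rightarrow> bool" where
  "directed_regular n r m \<longleftrightarrow>
     (\<forall>u\<in>{1..n}. (\<Sum>v\<in>{1..n}. m u v) = r \<and> (\<Sum>v\<in>{1..n}. m v u) = r)"

definition doubly_stochastic :: "nat \<Rightarrow> (nat \<Rightarrow> nat \<Rightarrow> real) \<Rightarrow> bool" where
  "doubly_stochastic n A \<longleftrightarrow>
     (\<forall>i\<in>{1..n}. \<forall>j\<in>{1..n}. A i j \<ge> 0) \<and>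
     (\<forall>i\<in>{1..n}. (\<Sum>j\<in>{1..n}. A i j) = 1) \<and>
     (\<forall>j\<in>{1..n}. (\<Sum>i\<in>{1..n}. A i j) = 1)"

text \<open>Each arc has capacity 1/(2n-1); G directly hosts A if a_{u,v} \<le> m_{u,v}/(2n-1).\<close>
definition directly_hosts :: "nat \<Rightarrow> (nat \<Rightarrow> nat \<Rightarrow> nat) \<Rightarrow> (nat \<Rightarrow> nat \<Rightarrow> real) \<Rightarrow> bool" where
  "directly_hosts n m A \<longleftrightarrow>
     (\<forall>u\<in>{1..n}. \<forall>v\<in>{1..n}. A u v \<le> real (m u v) / (2 * real n - 1))"

text \<open>Direct throughput: the largest theta such that G directly hosts theta*M
(the set of such theta is closed, so its supremum is attained).\<close>
definition direct_throughput :: "nat \<Rightarrow> (nat \<Rightarrow> nat \<Rightarrow> nat) \<Rightarrow> (nat \<Rightarrow> nat \<Rightarrow> real) \<Rightarrow> real" where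
  "direct_throughput n m M = Sup {\<theta>. directly_hosts n m (\<lambda>i j. \<theta> * M i j)}"

end

theory Submission
  imports Defs
begin

theorem proposition3p6:
  fixes n :: nat and \<kappa> :: real
  assumes "n \<ge> 1" and "\<kappa> > real n / (2 * real n - 1)"
  shows "\<exists>M. doubly_stochastic n M \<and>
           (\<forall>m. directed_regular n (2 * n - 1) m \<longrightarrow> \<not> (direct_throughput n m M \<ge> \<kappa>))"
proof (intro exI[of _ "\<lambda>i j. 1 / real n"] conjI allI impI)
  show "doubly_stochastic n (\<lambda>i j. 1 / real n)"
    using assms(1) by (simp add: doubly_stochastic_def)
next
  fix m assume reg: "directed_regular n (2 * n - 1) m"
  have row: "(\<Sum>v\<in>{1..n}. m 1 v) = 2 * n - 1"
    using reg assms(1) unfolding directed_regular_def by auto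
  obtain v where v: "v \<in> {1..n}" "m 1 v \<le> 1"
  proof (rule ccontr)
    assume "\<not> thesis"
    with that have "\<forall>v\<in>{1..n}. 2 \<le> m 1 v" by force
    then have "(\<Sum>v\<in>{1..n}. (2::nat)) \<le> (\<Sum>v\<in>{1..n}. m 1 v)" by (intro sum_mono) auto
    then show False using row assms(1) by simp
  qed
  have pos: "2 * real n - 1 > 0" using assms(1) by simp
  have npos: "real n > 0" using assms(1) by simp
  let ?S = "{\<theta>. directly_hosts n m (\<lambda>i j. \<theta> * (1 / real n))}"
  have "0 \<in> ?S" using pos by (simp add: directly_hosts_def)
  moreover have "\<theta> \<le> real n / (2 * real n - 1)" if "\<theta> \<in> ?S" for \<theta>
  proof -
    have "\<theta> * (1 / real n) \<le> real (m 1 v) / (2 * real n - 1)"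
      using that v(1) assms(1) by (auto simp: directly_hosts_def)
    also have "\<dots> \<le> 1 / (2 * real n - 1)"
      using v(2) pos by (simp add: divide_right_mono)
    finally have "\<theta> / real n \<le> 1 / (2 * real n - 1)" by simp
    then show ?thesis using npos pos by (simp add: field_simps)
  qed
  ultimately have "Sup ?S \<le> real n / (2 * real n - 1)"
    by (intro cSup_least) (blast, simp)
  then show "\<not> (direct_throughput n m (\<lambda>i j. 1 / real n) \<ge> \<kappa>)"
    using assms(2) unfolding direct_throughput_def by linarith
qed

end
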